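(* Under the hypotheses of the infinite horizon dynamic programming lemma (time-invariant UMCO channel on finite alphabets; there exist $V:\mathbb B\to\mathbb R$ and $J^*\in\mathbb R$ with $\lim_{t\to\infty}(\widetilde V_t(b)-tJ^* )=V(b)$ for all $b$, and $(V,J^* )$ solves the average-reward dynamic programming equation), a time-invariant channel input distribution $\{\pi^\infty(a_0|b_{-1}):b_{-1}\in\mathbb B\}$ achieves the supremum in the dynamic programming equation if and only if there exist $\{V(b_{-1}):b_{-1}\in\mathbb B\}$ such that $$J^*+V(b_{-1})=\sum_{b_0}\Big(\log\frac{\mathbf P(b_0|b_{-1},a_0)}{\mathbf P^{\pi^\infty}(b_0|b_{-1})}+V(b_0)\Big)\mathbf P(b_0|b_{-1},a_0)\quad\forall a_0\text{ with }\pi^\infty(a_0|b_{-1})\ne0,$$ $$J^*+V(b_{-1})\le\sum_{b_0}\Big(\log\frac{\mathbf P(b_0|b_{-1},a_0)}{\mathbf P^{\pi^\infty}(b_0|b_{-1})}+V(b_0)\Big)\mathbf P(b_0|b_{-1},a_0)\quad\forall a_0\text{ with }\pi^\infty(a_0|b_{-1})=0.$$ Moreover, $V$ is then the relative value function solving the dynamic programming equation.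
   Context: Time-invariant UMCO channel $\mathbf P(b_i|b_{i-1},a_i)$ on finite alphabets; $\mathbf P^{\pi}(b_0|b_{-1})=\sum_a\mathbf P(b_0|b_{-1},a)\pi(a|b_{-1})$. $\widetilde V_0\equiv0$, $\widetilde V_t(b_{-1})=\sup_{\pi(\cdot|b_{-1})}\sum_{a_0}\{\sum_{b_0}\log\frac{\mathbf P(b_0|b_{-1},a_0)}{\mathbf P^\pi(b_0|b_{-1})}\mathbf P(b_0|b_{-1},a_0)+\sum_{b_0}\widetilde V_{t-1}(b_0)\mathbf P(b_0|b_{-1},a_0)\}\pi(a_0|b_{-1})$. The dynamic programming equation is $J^*+V(b_{-1})=\sup_{\pi(\cdot|b_{-1})}\sum_{a_0}\{\sum_{b_0}\log\frac{\mathbf P(b_0|b_{-1},a_0)}{\mathbf P^\pi(b_0|b_{-1})}\mathbf P(b_0|b_{-1},a_0)+\sum_{b_0}V(b_0)\mathbf P(b_0|b_{-1},a_0)\}\pi(a_0|b_{-1})$. *)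

theory Defs
  imports "HOL-Analysis.Analysis"
begin

text \<open>Channel: P b0 bprev a = P(b0 | b_{-1}=bprev, a_0 = a), on finite alphabets
  'a (inputs) and 'b (outputs). A conditional input distribution at bprev is q :: 'a => real.\<close>

definition is_dist :: "('x::finite \<Rightarrow> real) \<Rightarrow> bool" where
  "is_dist q \<longleftrightarrow> (\<forall>x. q x \<ge> 0) \<and> (\<Sum>x\<in>UNIV. q x) = 1"

definition UMCO_channel :: "('b::finite \<Rightarrow> 'b \<Rightarrow> 'a::finite \<Rightarrow> real) \<Rightarrow> bool" where
  "UMCO_channel P \<longleftrightarrow> (\<forall>bprev a. is_dist (\<lambda>b0. P b0 bprev a))"

definition Ppi :: "('b::finite \<Rightarrow> 'b \<Rightarrow> 'a::finite \<Rightarrow> real) \<Rightarrow> 'b \<Rightarrow> ('a \<Rightarrow> real) \<Rightarrow> 'b \<Rightarrow> real" where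
  "Ppi P bprev q b0 = (\<Sum>a\<in>UNIV. P b0 bprev a * q a)"

definition input_term :: "('b::finite \<Rightarrow> 'b \<Rightarrow> 'a::finite \<Rightarrow> real) \<Rightarrow> ('b \<Rightarrow> real) \<Rightarrow> 'b \<Rightarrow> ('a \<Rightarrow> real) \<Rightarrow> 'a \<Rightarrow> real" where
  "input_term P W bprev q a =
     (\<Sum>b0\<in>UNIV. (ln (P b0 bprev a / Ppi P bprev q b0) + W b0) * P b0 bprev a)"

definition stage_obj :: "('b::finite \<Rightarrow> 'b \<Rightarrow> 'a::finite \<Rightarrow> real) \<Rightarrow> ('b \<Rightarrow> real) \<Rightarrow> 'b \<Rightarrow> ('a \<Rightarrow> real) \<Rightarrow> real" where
  "stage_obj P W bprev q = (\<Sum>a\<in>UNIV. input_term P W bprev q a * q a)"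

definition dp_sup :: "('b::finite \<Rightarrow> 'b \<Rightarrow> 'a::finite \<Rightarrow> real) \<Rightarrow> ('b \<Rightarrow> real) \<Rightarrow> 'b \<Rightarrow> real" where
  "dp_sup P W bprev = (SUP q\<in>{q. is_dist q}. stage_obj P W bprev q)"

fun Vt :: "('b::finite \<Rightarrow> 'b \<Rightarrow> 'a::finite \<Rightarrow> real) \<Rightarrow> nat \<Rightarrow> 'b \<Rightarrow> real" where
  "Vt P 0 = (\<lambda>b. 0)"
| "Vt P (Suc t) = (\<lambda>b. dp_sup P (Vt P t) b)"

definition DP_eq :: "('b::finite \<Rightarrow> 'b \<Rightarrow> 'a::finite \<Rightarrow> real) \<Rightarrow> real \<Rightarrow> ('b \<Rightarrow> real) \<Rightarrow> bool" where
  "DP_eq P J V \<longleftrightarrow> (\<forall>b. J + V b = dp_sup P V b)"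

definition achieves_sup :: "('b::finite \<Rightarrow> 'b \<Rightarrow> 'a::finite \<Rightarrow> real) \<Rightarrow> ('b \<Rightarrow> real) \<Rightarrow> ('b \<Rightarrow> 'a \<Rightarrow> real) \<Rightarrow> bool" where
  "achieves_sup P V pol \<longleftrightarrow> (\<forall>b. is_dist (pol b) \<and> stage_obj P V b (pol b) = dp_sup P V b)"

text \<open>For inputs with pi(a|b)=0 the right-hand side is
  +infinity (extended-real convention log(p/0)=+infinity for p>0) unless every output
  reachable from (b,a) has positive P^pi-probability; the inequality J+V <= +infinity
  fails, so that case is made explicit.\<close>
definition KKT_cond :: "('b::finite \<Rightarrow> 'b \<Rightarrow> 'a::finite \<Rightarrow> real) \<Rightarrow> real \<Rightarrow> ('b \<Rightarrow> real) \<Rightarrow> ('b \<Rightarrow> 'a \<Rightarrow> real) \<Rightarrow> bool" where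
  "KKT_cond P J V pol \<longleftrightarrow>
     (\<forall>b a. (pol b a \<noteq> 0 \<longrightarrow> J + V b = input_term P V b (pol b) a) \<and>
            (pol b a = 0 \<longrightarrow> (\<forall>b0. P b0 b a > 0 \<longrightarrow> Ppi P b (pol b) b0 > 0) \<and>
                            J + V b \<ge> input_term P V b (pol b) a))"

end

theory Submission
  imports Defs
begin


definition phi :: "real \<Rightarrow> real" where "phi x = - (x * ln x)"

definition cc :: "('b::finite \<Rightarrow> 'b \<Rightarrow> 'a::finite \<Rightarrow> real) \<Rightarrow> ('b \<Rightarrow> real) \<Rightarrow> 'b \<Rightarrow> 'a \<Rightarrow> real" where
  "cc P W b a = (\<Sum>b0\<in>UNIV. P b0 b a * ln (P b0 b a) + W b0 * P b0 b a)"

lemma gibbs_pt: assumes "(u::real) \<ge> 0" "m > 0" shows "u * ln u - u * ln m \<ge> u - m"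
proof (cases "u = 0")
  case True thus ?thesis using assms by simp
next
  case False
  hence u: "u > 0" using assms by simp
  have "ln (m/u) \<le> m/u - 1" using ln_le_minus_one[of "m/u"] u assms by simp
  hence "u * ln (m/u) \<le> u * (m/u - 1)" using u by (simp add: mult_left_mono)
  thus ?thesis using u assms by (simp add: ln_divide_pos algebra_simps)
qed

lemma chi_pt: assumes "(u::real) \<ge> 0" "m > 0" shows "u * ln u - u * ln m \<le> (u - m) + (u-m)^2/m"
proof (cases "u = 0")
  case True thus ?thesis using assms by (simp add: power2_eq_square)
next
  case False
  hence u: "u > 0" using assms by simp
  have "ln (u/m) \<le> u/m - 1" using ln_le_minus_one[of "u/m"] u assms by simp
  hence "u * ln (u/m) \<le> u * (u/m - 1)" using u by (simp add: mult_left_mono)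
  moreover have "u * (u/m - 1) = (u - m) + (u-m)^2/m" using assms
    by (simp add: field_simps power2_eq_square)
  ultimately show ?thesis using u assms by (simp add: ln_divide_pos algebra_simps)
qed

lemma phi_concave: assumes "(x::real) \<ge> 0" "y \<ge> 0" "0 \<le> t" "t \<le> 1"
  shows "(1-t) * phi x + t * phi y \<le> phi ((1-t)*x + t*y)"
proof -
  define m where "m = (1-t)*x + t*y"
  have m0: "m \<ge> 0" using assms unfolding m_def by simp
  show ?thesis
  proof (cases "m = 0")
    case True
    have "(1-t)*x \<ge> 0" "t*y \<ge> 0" using assms by simp_all
    hence "(1-t)*x = 0" "t*y = 0" using True unfolding m_def by linarith+
    hence "(1-t)*(x * ln x) = 0" "t*(y * ln y) = 0"
      by (metis mult.assoc mult_zero_left)+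
    moreover have "(1-t)*phi x = -((1-t)*(x*ln x))" "t*phi y = -(t*(y*ln y))" "phi m = 0"
      using True by (simp_all add: phi_def)
    ultimately show ?thesis unfolding m_def[symmetric] by linarith
  next
    case False
    hence mp: "m > 0" using m0 by simp
    have "(1-t) * (x * ln x - x * ln m) \<ge> (1-t) * (x - m)"
      using gibbs_pt[OF assms(1) mp] assms by (simp add: mult_left_mono)
    moreover have "t * (y * ln y - y * ln m) \<ge> t * (y - m)"
      using gibbs_pt[OF assms(2) mp] assms by (simp add: mult_left_mono)
    ultimately have "(1-t) * (x * ln x - x * ln m) + t * (y * ln y - y * ln m) \<ge> (1-t) * (x - m) + t*(y-m)"
      by linarith
    moreover have "(1-t) * (x - m) + t*(y-m) = 0" unfolding m_def by (simp add: algebra_simps)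
    moreover have "(1-t) * (x * ln x - x * ln m) + t * (y * ln y - y * ln m)
        = (1-t) * (x * ln x) + t * (y * ln y) - m * ln m" unfolding m_def by (simp add: algebra_simps)
    moreover have "(1-t)*phi x = -((1-t)*(x*ln x))" "t*phi y = -(t*(y*ln y))" "phi m = -(m * ln m)"
      by (simp_all add: phi_def)
    ultimately show ?thesis unfolding m_def[symmetric] by linarith
  qed
qed

lemma P_nonneg: "UMCO_channel P \<Longrightarrow> P b0 b a \<ge> 0"
  unfolding UMCO_channel_def is_dist_def by blast

lemma P_sum: "UMCO_channel P \<Longrightarrow> (\<Sum>b0\<in>UNIV. P b0 b a) = 1"
  unfolding UMCO_channel_def is_dist_def by blast

lemma Ppi_nonneg: "UMCO_channel P \<Longrightarrow> is_dist q \<Longrightarrow> Ppi P b q b0 \<ge> 0"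
  unfolding Ppi_def is_dist_def by (auto intro!: sum_nonneg simp: P_nonneg)

lemma Ppi_ge: assumes "UMCO_channel P" "is_dist q" shows "Ppi P b q b0 \<ge> P b0 b a * q a"
  unfolding Ppi_def
  by (rule member_le_sum) (use assms in \<open>auto simp: P_nonneg is_dist_def\<close>)

lemma Ppi_pos: "UMCO_channel P \<Longrightarrow> is_dist q \<Longrightarrow> P b0 b a > 0 \<Longrightarrow> q a > 0 \<Longrightarrow> Ppi P b q b0 > 0"
  by (smt (verit) Ppi_ge mult_pos_pos)

lemma Ppi_sum: assumes "UMCO_channel P" "is_dist q" shows "(\<Sum>b0\<in>UNIV. Ppi P b q b0) = 1"
proof -
  have "(\<Sum>b0\<in>UNIV. Ppi P b q b0) = (\<Sum>a\<in>UNIV. (\<Sum>b0\<in>UNIV. P b0 b a) * q a)"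
    unfolding Ppi_def sum_distrib_right by (rule sum.swap)
  also have "\<dots> = 1" using assms by (simp add: P_sum is_dist_def)
  finally show ?thesis .
qed

lemma stage_decomp: assumes ch: "UMCO_channel P" and q: "is_dist q"
  shows "stage_obj P W b q = (\<Sum>a\<in>UNIV. q a * cc P W b a) + (\<Sum>b0\<in>UNIV. phi (Ppi P b q b0))"
proof -
  have pt: "(ln (P b0 b a / Ppi P b q b0) + W b0) * P b0 b a * q a
     = (P b0 b a * ln (P b0 b a) + W b0 * P b0 b a) * q a - P b0 b a * q a * ln (Ppi P b q b0)" for b0 a
  proof (cases "P b0 b a = 0 \<or> q a = 0")
    case True thus ?thesis by auto
  next
    case False
    hence "P b0 b a > 0" "q a > 0" using P_nonneg[OF ch] q unfolding is_dist_def
      by (metis less_eq_real_def)+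
    hence "Ppi P b q b0 > 0" using Ppi_pos[OF ch q] by blast
    thus ?thesis using \<open>P b0 b a > 0\<close> by (simp add: ln_divide_pos algebra_simps)
  qed
  have "stage_obj P W b q = (\<Sum>a\<in>UNIV. \<Sum>b0\<in>UNIV. (ln (P b0 b a / Ppi P b q b0) + W b0) * P b0 b a * q a)"
    unfolding stage_obj_def input_term_def by (simp add: sum_distrib_right)
  also have "\<dots> = (\<Sum>a\<in>UNIV. \<Sum>b0\<in>UNIV. (P b0 b a * ln (P b0 b a) + W b0 * P b0 b a) * q a)
       - (\<Sum>a\<in>UNIV. \<Sum>b0\<in>UNIV. P b0 b a * q a * ln (Ppi P b q b0))"
    by (simp add: pt sum_subtractf)
  also have "(\<Sum>a\<in>UNIV. \<Sum>b0\<in>UNIV. (P b0 b a * ln (P b0 b a) + W b0 * P b0 b a) * q a)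
      = (\<Sum>a\<in>UNIV. q a * cc P W b a)"
    unfolding cc_def by (simp add: sum_distrib_left mult.commute)
  also have "(\<Sum>a\<in>UNIV. \<Sum>b0\<in>UNIV. P b0 b a * q a * ln (Ppi P b q b0))
     = (\<Sum>b0\<in>UNIV. Ppi P b q b0 * ln (Ppi P b q b0))"
  proof -
    have g: "(\<Sum>a\<in>UNIV. \<Sum>b0\<in>UNIV. P b0 b a * q a * g b0) = (\<Sum>b0\<in>UNIV. (\<Sum>a\<in>UNIV. P b0 b a * q a) * g b0)" for g
      unfolding sum_distrib_right by (rule sum.swap)
    show ?thesis using g[of "\<lambda>b0. ln (Ppi P b q b0)"] unfolding Ppi_def[symmetric] .
  qed
  finally show ?thesis unfolding phi_def by (simp add: sum_negf)
qed

lemma input_decomp: assumes ch: "UMCO_channel P"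
  and sup: "\<forall>b0. P b0 b a > 0 \<longrightarrow> Ppi P b q b0 > 0"
  shows "input_term P W b q a = cc P W b a - (\<Sum>b0\<in>UNIV. P b0 b a * ln (Ppi P b q b0))"
proof -
  have pt: "(ln (P b0 b a / Ppi P b q b0) + W b0) * P b0 b a
     = (P b0 b a * ln (P b0 b a) + W b0 * P b0 b a) - P b0 b a * ln (Ppi P b q b0)" for b0
  proof (cases "P b0 b a = 0")
    case True thus ?thesis by auto
  next
    case False
    hence "P b0 b a > 0" using P_nonneg[OF ch] by (metis less_eq_real_def)
    thus ?thesis using sup by (simp add: ln_divide_pos algebra_simps)
  qed
  show ?thesis unfolding input_term_def cc_def by (simp add: pt sum_subtractf)
qed



lemma dist_le1: "is_dist q \<Longrightarrow> q a \<le> 1"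
  unfolding is_dist_def by (metis finite UNIV_I member_le_sum)

lemma stage_bound: fixes P :: "'b::finite \<Rightarrow> 'b \<Rightarrow> 'a::finite \<Rightarrow> real"
  assumes ch: "UMCO_channel P" and q: "is_dist q"
  shows "stage_obj P W b q \<le> (\<Sum>a\<in>UNIV. \<bar>cc P W b a\<bar>) + real CARD('b)"
proof -
  have "(\<Sum>a\<in>UNIV. q a * cc P W b a) \<le> (\<Sum>a\<in>UNIV. \<bar>cc P W b a\<bar>)"
  proof (rule sum_mono)
    fix a
    have "q a * cc P W b a \<le> q a * \<bar>cc P W b a\<bar>"
      using q unfolding is_dist_def by (simp add: mult_left_mono)
    also have "\<dots> \<le> 1 * \<bar>cc P W b a\<bar>" by (rule mult_right_mono[OF dist_le1[OF q]]) simp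
    finally show "q a * cc P W b a \<le> \<bar>cc P W b a\<bar>" by simp
  qed
  moreover have "(\<Sum>b0\<in>UNIV. phi (Ppi P b q b0)) \<le> (\<Sum>b0\<in>(UNIV::'b set). 1)"
  proof (rule sum_mono)
    fix b0
    have x: "Ppi P b q b0 \<ge> 0" using Ppi_nonneg[OF ch q] .
    have "Ppi P b q b0 * ln (Ppi P b q b0) - Ppi P b q b0 * ln 1 \<ge> Ppi P b q b0 - 1"
      using gibbs_pt[OF x, of 1] by simp
    thus "phi (Ppi P b q b0) \<le> 1" unfolding phi_def using x by simp
  qed
  ultimately show ?thesis using stage_decomp[OF ch q, of W b] by simp
qed

lemma stage_le_sup: assumes ch: "UMCO_channel P" and q: "is_dist q"
  shows "stage_obj P W b q \<le> dp_sup P W b"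
  unfolding dp_sup_def
  by (rule cSUP_upper) (use q stage_bound[OF ch] in \<open>auto intro!: bdd_aboveI2\<close>)

lemma sufficiency:
  fixes P :: "'b::finite \<Rightarrow> 'b \<Rightarrow> 'a::finite \<Rightarrow> real" and p :: "'a \<Rightarrow> real"
  assumes ch: "UMCO_channel P" and pd: "is_dist p"
    and eqs: "\<forall>a. p a \<noteq> 0 \<longrightarrow> J + W b = input_term P W b p a"
    and les: "\<forall>a. p a = 0 \<longrightarrow> (\<forall>b0. P b0 b a > 0 \<longrightarrow> Ppi P b p b0 > 0) \<and> J + W b \<ge> input_term P W b p a"
  shows "stage_obj P W b p = J + W b" "\<And>q. is_dist q \<Longrightarrow> stage_obj P W b q \<le> J + W b"
proof -
  have pnn: "p a \<ge> 0" for a using pd unfolding is_dist_def by blast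
  have supp: "P b0 b a > 0 \<Longrightarrow> Ppi P b p b0 > 0" for a b0
  proof (cases "p a = 0")
    case True thus "P b0 b a > 0 \<Longrightarrow> Ppi P b p b0 > 0" using les by blast
  next
    case False thus "P b0 b a > 0 \<Longrightarrow> Ppi P b p b0 > 0"
      using Ppi_pos[OF ch pd] pnn[of a] by (simp add: less_le)
  qed
  have Tle: "input_term P W b p a \<le> J + W b" for a
    using eqs les by (cases "p a = 0") auto
  have "stage_obj P W b p = (\<Sum>a\<in>UNIV. (J + W b) * p a)"
    unfolding stage_obj_def by (rule sum.cong) (use eqs in auto)
  also have "\<dots> = J + W b" using pd unfolding is_dist_def by (simp add: sum_distrib_left[symmetric])
  finally show "stage_obj P W b p = J + W b" .
  fix q :: "'a \<Rightarrow> real" assume q: "is_dist q"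
  have qnn: "q a \<ge> 0" for a using q unfolding is_dist_def by blast
  have pos: "Ppi P b q b0 > 0 \<Longrightarrow> Ppi P b p b0 > 0" for b0
  proof -
    assume "Ppi P b q b0 > 0"
    hence "(\<Sum>a\<in>UNIV. P b0 b a * q a) \<noteq> 0" unfolding Ppi_def by simp
    then obtain a where "P b0 b a * q a \<noteq> 0" by (meson sum.neutral)
    hence "P b0 b a > 0" using P_nonneg[OF ch, of b0 b a] qnn[of a] by (simp add: less_le)
    thus ?thesis using supp by blast
  qed
  have gib: "Ppi P b q b0 * ln (Ppi P b q b0) - Ppi P b q b0 * ln (Ppi P b p b0)
        \<ge> Ppi P b q b0 - Ppi P b p b0" for b0
  proof (cases "Ppi P b p b0 > 0")
    case True thus ?thesis using gibbs_pt[OF Ppi_nonneg[OF ch q]] by blast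
  next
    case False
    hence "Ppi P b q b0 = 0" using pos Ppi_nonneg[OF ch q, of b b0] by (auto simp: less_le)
    thus ?thesis using Ppi_nonneg[OF ch pd, of b b0] by simp
  qed
  have "(\<Sum>b0\<in>UNIV. Ppi P b q b0 * ln (Ppi P b q b0) - Ppi P b q b0 * ln (Ppi P b p b0))
       \<ge> (\<Sum>b0\<in>UNIV. Ppi P b q b0 - Ppi P b p b0)" by (rule sum_mono) (rule gib)
  also have "(\<Sum>b0\<in>UNIV. Ppi P b q b0 - Ppi P b p b0) = 0"
    using Ppi_sum[OF ch q] Ppi_sum[OF ch pd] by (simp add: sum_subtractf)
  finally have G: "(\<Sum>b0\<in>UNIV. phi (Ppi P b q b0)) \<le> - (\<Sum>b0\<in>UNIV. Ppi P b q b0 * ln (Ppi P b p b0))"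
    unfolding phi_def by (simp add: sum_subtractf sum_negf)
  have sw: "(\<Sum>b0\<in>UNIV. Ppi P b q b0 * ln (Ppi P b p b0))
       = (\<Sum>a\<in>UNIV. q a * (\<Sum>b0\<in>UNIV. P b0 b a * ln (Ppi P b p b0)))"
  proof -
    have g: "(\<Sum>a\<in>UNIV. \<Sum>b0\<in>UNIV. P b0 b a * q a * g b0) = (\<Sum>b0\<in>UNIV. (\<Sum>a\<in>UNIV. P b0 b a * q a) * g b0)" for g
      unfolding sum_distrib_right by (rule sum.swap)
    have "(\<Sum>a\<in>UNIV. q a * (\<Sum>b0\<in>UNIV. P b0 b a * ln (Ppi P b p b0)))
        = (\<Sum>a\<in>UNIV. \<Sum>b0\<in>UNIV. P b0 b a * q a * ln (Ppi P b p b0))"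
      by (simp add: sum_distrib_left algebra_simps)
    thus ?thesis using g[of "\<lambda>b0. ln (Ppi P b p b0)"] unfolding Ppi_def[symmetric] by simp
  qed
  have "stage_obj P W b q \<le> (\<Sum>a\<in>UNIV. q a * cc P W b a) - (\<Sum>a\<in>UNIV. q a * (\<Sum>b0\<in>UNIV. P b0 b a * ln (Ppi P b p b0)))"
    using stage_decomp[OF ch q, of W b] G sw by linarith
  also have "\<dots> = (\<Sum>a\<in>UNIV. q a * input_term P W b p a)"
  proof -
    have "input_term P W b p a = cc P W b a - (\<Sum>b0\<in>UNIV. P b0 b a * ln (Ppi P b p b0))" for a
      using input_decomp[OF ch, of b a p W] supp by blast
    hence "q a * input_term P W b p a = q a * cc P W b a - q a * (\<Sum>b0\<in>UNIV. P b0 b a * ln (Ppi P b p b0))" for a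
      by (simp add: right_diff_distrib)
    thus ?thesis by (simp add: sum_subtractf[symmetric])
  qed
  also have "\<dots> \<le> (\<Sum>a\<in>UNIV. q a * (J + W b))"
    by (rule sum_mono) (simp add: Tle qnn mult_left_mono)
  also have "\<dots> = J + W b" using q unfolding is_dist_def by (simp add: sum_distrib_right[symmetric])
  finally show "stage_obj P W b q \<le> J + W b" .
qed



lemma mix_sum: "(\<Sum>x\<in>UNIV. ((1-e)*p x + e*ind x) * (g x::real)) = (1-e)*(\<Sum>x\<in>UNIV. p x * g x) + e*(\<Sum>x\<in>UNIV. ind x * g x)"
proof -
  have "((1-e)*p x + e*ind x) * g x = (1-e)*(p x*g x) + e*(ind x*g x)" for x by (simp add: algebra_simps)
  thus ?thesis by (simp only: sum.distrib sum_distrib_left)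
qed

lemma delta_sum: "(\<Sum>x\<in>(UNIV::'a::finite set). (if x = a then 1 else 0) * (g x::real)) = g a"
proof -
  have "(\<Sum>x\<in>(UNIV::'a set). (if x = a then 1 else 0) * g x) = (\<Sum>x\<in>UNIV. if x = a then g x else 0)"
    by (rule sum.cong) auto
  also have "\<dots> = g a" by simp
  finally show ?thesis .
qed

lemma necessity:
  fixes P :: "'b::finite \<Rightarrow> 'b \<Rightarrow> 'a::finite \<Rightarrow> real" and p :: "'a \<Rightarrow> real"
  assumes ch: "UMCO_channel P" and pd: "is_dist p"
    and opt: "\<And>q. is_dist q \<Longrightarrow> stage_obj P W b q \<le> stage_obj P W b p"
  shows "\<forall>b0. P b0 b a > 0 \<longrightarrow> Ppi P b p b0 > 0" "input_term P W b p a \<le> stage_obj P W b p"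
proof -
  define qe where "qe e = (\<lambda>a'. (1-e) * p a' + e * (if a' = a then 1 else 0))" for e :: real
  define r where "r = Ppi P b p"
  define s where "s = (\<lambda>b0. P b0 b a)"
  define c where "c = cc P W b"
  define S where "S = (\<Sum>a'\<in>UNIV. p a' * c a')"
  have pnn: "p x \<ge> 0" for x using pd unfolding is_dist_def by blast
  have rnn: "r b0 \<ge> 0" for b0 unfolding r_def using Ppi_nonneg[OF ch pd] .
  have snn: "s b0 \<ge> 0" for b0 unfolding s_def using P_nonneg[OF ch] .
  define ind where "ind = (\<lambda>a'::'a. if a' = a then (1::real) else 0)"
  have qe_alt: "qe e = (\<lambda>a'. (1-e) * p a' + e * ind a')" for e unfolding qe_def ind_def by simp
  have qe_dist: "is_dist (qe e)" if "0 \<le> e" "e \<le> 1" for e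
  proof -
    have "(\<Sum>a'\<in>UNIV. qe e a') = (\<Sum>a'\<in>UNIV. ((1-e) * p a' + e * ind a') * 1)" unfolding qe_alt by simp
    also have "\<dots> = (1-e) * (\<Sum>a'\<in>UNIV. p a' * 1) + e * (\<Sum>a'\<in>UNIV. ind a' * 1)" by (rule mix_sum)
    also have "(\<Sum>a'\<in>UNIV. ind a' * 1) = 1" using delta_sum[of a "\<lambda>_. 1"] unfolding ind_def by simp
    finally have "(\<Sum>a'\<in>UNIV. qe e a') = 1" using pd unfolding is_dist_def by simp
    moreover have "qe e x \<ge> 0" for x using that pnn[of x] unfolding qe_def by simp
    ultimately show ?thesis unfolding is_dist_def by blast
  qed
  have Ppi_qe: "Ppi P b (qe e) b0 = (1-e) * r b0 + e * s b0" for e b0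
  proof -
    have "Ppi P b (qe e) b0 = (\<Sum>a'\<in>UNIV. ((1-e) * p a' + e * ind a') * P b0 b a')"
      unfolding Ppi_def qe_alt by (simp add: mult.commute)
    also have "\<dots> = (1-e) * (\<Sum>a'\<in>UNIV. p a' * P b0 b a') + e * (\<Sum>a'\<in>UNIV. ind a' * P b0 b a')" by (rule mix_sum)
    also have "(\<Sum>a'\<in>UNIV. ind a' * P b0 b a') = s b0" using delta_sum[of a "\<lambda>a'. P b0 b a'"] unfolding ind_def s_def by simp
    also have "(\<Sum>a'\<in>UNIV. p a' * P b0 b a') = r b0" unfolding r_def Ppi_def by (simp add: mult.commute)
    finally show ?thesis .
  qed
  have lin_qe: "(\<Sum>a'\<in>UNIV. qe e a' * c a') = (1-e) * S + e * c a" for e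
  proof -
    have "(\<Sum>a'\<in>UNIV. qe e a' * c a') = (1-e) * (\<Sum>a'\<in>UNIV. p a' * c a') + e * (\<Sum>a'\<in>UNIV. ind a' * c a')"
      unfolding qe_alt by (rule mix_sum)
    also have "(\<Sum>a'\<in>UNIV. ind a' * c a') = c a" using delta_sum[of a c] unfolding ind_def by simp
    finally show ?thesis unfolding S_def .
  qed
  have f_qe: "stage_obj P W b (qe e) = (1-e) * S + e * c a + (\<Sum>b0\<in>UNIV. phi ((1-e) * r b0 + e * s b0))"
    if "0 \<le> e" "e \<le> 1" for e
    using stage_decomp[OF ch qe_dist[OF that], of W b] lin_qe[of e] Ppi_qe unfolding c_def by simp
  have f_p: "stage_obj P W b p = S + (\<Sum>b0\<in>UNIV. phi (r b0))"
    using stage_decomp[OF ch pd, of W b] unfolding S_def c_def r_def by simp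
  have le: "stage_obj P W b (qe e) \<le> stage_obj P W b p" if "0 \<le> e" "e \<le> 1" for e
    using opt[OF qe_dist[OF that]] .
  show supp: "\<forall>b0. P b0 b a > 0 \<longrightarrow> Ppi P b p b0 > 0"
  proof (rule ccontr)
    assume "\<not> ?thesis"
    then obtain b1 where s1: "s b1 > 0" and r1: "r b1 = 0"
      unfolding s_def r_def using Ppi_nonneg[OF ch pd] by (auto simp: less_le)
    define M where "M = c a - S - (\<Sum>b0\<in>UNIV. phi (r b0)) + (\<Sum>b0\<in>UNIV. phi (s b0))"
    define e where "e = exp (- (\<bar>M\<bar> / s b1 + 1))"
    have e0: "e > 0" unfolding e_def by simp
    have e1: "e < 1" unfolding e_def
      by (smt (verit) s1 divide_nonneg_pos abs_ge_zero exp_less_one_iff)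
    have lne: "s b1 * ln e = - (\<bar>M\<bar> + s b1)" unfolding e_def using s1 by (simp add: field_simps)
    have pt: "phi ((1-e) * r b0 + e * s b0) \<ge> (1-e) * phi (r b0) + e * phi (s b0)
        + (if b0 = b1 then phi (e * s b1) - e * phi (s b1) else 0)" for b0
    proof (cases "b0 = b1")
      case True thus ?thesis using r1 by (simp add: phi_def)
    next
      case False thus ?thesis using phi_concave[OF rnn snn, of e b0 b0] e0 e1 by simp
    qed
    have "(\<Sum>b0\<in>UNIV. phi ((1-e) * r b0 + e * s b0)) \<ge> (\<Sum>b0\<in>UNIV. (1-e) * phi (r b0) + e * phi (s b0)
        + (if b0 = b1 then phi (e * s b1) - e * phi (s b1) else 0))"
      by (rule sum_mono) (rule pt)
    also have "(\<Sum>b0\<in>UNIV. (1-e) * phi (r b0) + e * phi (s b0)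
        + (if b0 = b1 then phi (e * s b1) - e * phi (s b1) else 0))
      = (1-e) * (\<Sum>b0\<in>UNIV. phi (r b0)) + e * (\<Sum>b0\<in>UNIV. phi (s b0)) + (phi (e * s b1) - e * phi (s b1))"
      by (simp add: sum.distrib sum_distrib_left)
    finally have A: "(\<Sum>b0\<in>UNIV. phi ((1-e) * r b0 + e * s b0)) \<ge>
       (1-e) * (\<Sum>b0\<in>UNIV. phi (r b0)) + e * (\<Sum>b0\<in>UNIV. phi (s b0)) + (phi (e * s b1) - e * phi (s b1))" .
    have ph: "phi (e * s b1) - e * phi (s b1) = - e * (s b1 * ln e)"
      unfolding phi_def using e0 s1 by (simp add: ln_mult algebra_simps)
    have "stage_obj P W b (qe e) \<ge> stage_obj P W b p + e * (M - s b1 * ln e)"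
      using f_qe[of e] e0 e1 A ph f_p unfolding M_def by (simp add: algebra_simps)
    moreover have "e * (M - s b1 * ln e) > 0" using e0 s1 lne by (simp add: abs_if)
    ultimately show False using le[of e] e0 e1 by simp
  qed
  define C where "C = (\<Sum>b0\<in>UNIV. (s b0 - r b0)^2 / r b0)"
  have C0: "C \<ge> 0" unfolding C_def using rnn by (auto intro!: sum_nonneg)
  have T: "input_term P W b p a = c a - (\<Sum>b0\<in>UNIV. s b0 * ln (r b0))"
    using input_decomp[OF ch, of b a p W] supp unfolding c_def s_def r_def by blast
  have bnd: "input_term P W b p a - stage_obj P W b p \<le> e * C" if e0: "0 < e" and e1: "e \<le> 1" for e
  proof -
    define re where "re b0 = (1-e) * r b0 + e * s b0" for b0
    have renn: "re b0 \<ge> 0" for b0 unfolding re_def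
      by (intro add_nonneg_nonneg mult_nonneg_nonneg) (use rnn snn e0 e1 in auto)
    have pt: "phi (re b0) - phi (r b0) + e * (s b0 - r b0) * ln (r b0) \<ge> -(re b0 - r b0) - e^2 * ((s b0 - r b0)^2 / r b0)" for b0
    proof (cases "r b0 > 0")
      case True
      have "re b0 * ln (re b0) - re b0 * ln (r b0) \<le> (re b0 - r b0) + (re b0 - r b0)^2 / r b0"
        using chi_pt[OF renn True] .
      moreover have "(re b0 - r b0)^2 = e^2 * (s b0 - r b0)^2" unfolding re_def by (simp add: power2_eq_square algebra_simps)
      moreover have "phi (re b0) - phi (r b0) + e * (s b0 - r b0) * ln (r b0) = - (re b0 * ln (re b0) - re b0 * ln (r b0))"
        unfolding phi_def re_def by (simp add: algebra_simps)
      ultimately show ?thesis by simp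
    next
      case False
      hence r0: "r b0 = 0" using rnn[of b0] by simp
      hence "s b0 = 0" using supp snn[of b0] unfolding s_def r_def by (auto simp: less_le)
      thus ?thesis using r0 unfolding re_def phi_def by simp
    qed
    have "(\<Sum>b0\<in>UNIV. phi (re b0) - phi (r b0) + e * (s b0 - r b0) * ln (r b0))
        \<ge> (\<Sum>b0\<in>UNIV. -(re b0 - r b0) - e^2 * ((s b0 - r b0)^2 / r b0))"
      by (rule sum_mono) (rule pt)
    moreover have "(\<Sum>b0\<in>UNIV. -(re b0 - r b0) - e^2 * ((s b0 - r b0)^2 / r b0)) = (- (e^2 * C))"
    proof -
      have "(\<Sum>b0\<in>UNIV. re b0) = 1" using Ppi_sum[OF ch qe_dist, of e b] e0 e1 Ppi_qe unfolding re_def by simp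
      moreover have "(\<Sum>b0\<in>UNIV. r b0) = 1" using Ppi_sum[OF ch pd] unfolding r_def by simp
      ultimately show ?thesis unfolding C_def by (simp add: sum_subtractf sum_distrib_left sum_negf)
    qed
    moreover have "(\<Sum>b0\<in>UNIV. phi (re b0) - phi (r b0) + e * (s b0 - r b0) * ln (r b0))
       = (\<Sum>b0\<in>UNIV. phi (re b0)) - (\<Sum>b0\<in>UNIV. phi (r b0)) + e * (\<Sum>b0\<in>UNIV. s b0 * ln (r b0))
          + e * (\<Sum>b0\<in>UNIV. phi (r b0))"
      unfolding phi_def by (simp add: sum.distrib sum_subtractf sum_distrib_left algebra_simps sum_negf)
    ultimately have K: "(\<Sum>b0\<in>UNIV. phi (re b0)) - (\<Sum>b0\<in>UNIV. phi (r b0)) + e * (\<Sum>b0\<in>UNIV. s b0 * ln (r b0))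
          + e * (\<Sum>b0\<in>UNIV. phi (r b0)) \<ge> (- (e^2 * C))" by simp
    have "stage_obj P W b (qe e) - stage_obj P W b p = e * c a - e * S + (\<Sum>b0\<in>UNIV. phi (re b0)) - (\<Sum>b0\<in>UNIV. phi (r b0))"
      using f_qe[of e] f_p e0 e1 unfolding re_def by (simp add: algebra_simps)
    hence "e * (input_term P W b p a - stage_obj P W b p) - e^2 * C \<le> 0"
    proof -
      have "e * input_term P W b p a = e * c a - e * (\<Sum>b0\<in>UNIV. s b0 * ln (r b0))" unfolding T by (simp add: right_diff_distrib)
      moreover have "e * stage_obj P W b p = e * S + e * (\<Sum>b0\<in>UNIV. phi (r b0))" using f_p by (simp add: algebra_simps)
      ultimately show ?thesis using K le[of e] e0 e1 f_p \<open>stage_obj P W b (qe e) - stage_obj P W b p = _\<close>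
        by (simp add: right_diff_distrib)
    qed
    hence "e * (input_term P W b p a - stage_obj P W b p) \<le> e * (e * C)" by (simp add: power2_eq_square algebra_simps)
    thus ?thesis using e0 by simp
  qed
  show "input_term P W b p a \<le> stage_obj P W b p"
  proof (rule ccontr)
    assume nt: "\<not> ?thesis"
    define d where "d = input_term P W b p a - stage_obj P W b p"
    have d0: "d > 0" using nt unfolding d_def by simp
    define e where "e = d / (d + C + 1)"
    have e0: "e > 0" unfolding e_def using d0 C0 by simp
    have e1: "e \<le> 1" unfolding e_def using d0 C0 by simp
    have "e * C < d" unfolding e_def using d0 C0 by (simp add: field_simps add_pos_pos)
    thus False using bnd[OF e0 e1] unfolding d_def by simp
  qed
qed



theorem mainTheorem7:
  fixes P :: "'b::finite \<Rightarrow> 'b \<Rightarrow> 'a::finite \<Rightarrow> real"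
    and V :: "'b \<Rightarrow> real" and J :: real
    and pol :: "'b \<Rightarrow> 'a \<Rightarrow> real"
  assumes channel: "UMCO_channel P"
    and lim: "\<forall>b. (\<lambda>t. Vt P t b - real t * J) \<longlonglongrightarrow> V b"
    and dp: "DP_eq P J V"
    and pi_dist: "\<forall>b. is_dist (pol b)"
  shows "(achieves_sup P V pol \<longrightarrow> KKT_cond P J V pol) \<and>
         (\<forall>W. KKT_cond P J W pol \<longrightarrow> achieves_sup P W pol \<and> DP_eq P J W)"
proof
  show "achieves_sup P V pol \<longrightarrow> KKT_cond P J V pol"
  proof
    assume ach: "achieves_sup P V pol"
    show "KKT_cond P J V pol" unfolding KKT_cond_def
    proof (intro allI)
      fix b a
      have pd: "is_dist (pol b)" using pi_dist by blast
      have fp: "stage_obj P V b (pol b) = J + V b" using ach dp unfolding achieves_sup_def DP_eq_def by simp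
      have opt: "stage_obj P V b q \<le> stage_obj P V b (pol b)" if "is_dist q" for q
        using stage_le_sup[OF channel that, of V b] fp dp unfolding DP_eq_def by simp
      have supp: "\<forall>b0. P b0 b a > 0 \<longrightarrow> Ppi P b (pol b) b0 > 0"
        using necessity(1)[OF channel pd opt] by blast
      have Tle: "input_term P V b (pol b) a' \<le> J + V b" for a'
        using necessity(2)[OF channel pd opt, of a'] fp by simp
      have pnn: "pol b x \<ge> 0" for x using pd unfolding is_dist_def by blast
      have "(\<Sum>a'\<in>UNIV. pol b a' * (J + V b - input_term P V b (pol b) a'))
          = (J + V b) * (\<Sum>a'\<in>UNIV. pol b a') - stage_obj P V b (pol b)"
        unfolding stage_obj_def by (simp add: sum_subtractf sum_distrib_left sum_distrib_right algebra_simps)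
      also have "\<dots> = 0" using pd fp unfolding is_dist_def by simp
      finally have z: "(\<Sum>a'\<in>UNIV. pol b a' * (J + V b - input_term P V b (pol b) a')) = 0" .
      have "\<forall>a'\<in>UNIV. pol b a' * (J + V b - input_term P V b (pol b) a') = 0"
        using iffD1[OF sum_nonneg_eq_0_iff z] pnn Tle by simp
      hence eq: "pol b a \<noteq> 0 \<Longrightarrow> J + V b = input_term P V b (pol b) a" by auto
      show "(pol b a \<noteq> 0 \<longrightarrow> J + V b = input_term P V b (pol b) a) \<and>
            (pol b a = 0 \<longrightarrow> (\<forall>b0. P b0 b a > 0 \<longrightarrow> Ppi P b (pol b) b0 > 0) \<and>
                            J + V b \<ge> input_term P V b (pol b) a)"
        using eq supp Tle by blast
    qed
  qed
next
  show "\<forall>W. KKT_cond P J W pol \<longrightarrow> achieves_sup P W pol \<and> DP_eq P J W"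
  proof (intro allI impI)
    fix W assume K: "KKT_cond P J W pol"
    have main: "stage_obj P W b (pol b) = J + W b \<and> dp_sup P W b = J + W b" for b
    proof -
      have pd: "is_dist (pol b)" using pi_dist by blast
      have eqs: "\<forall>a. pol b a \<noteq> 0 \<longrightarrow> J + W b = input_term P W b (pol b) a"
        and les: "\<forall>a. pol b a = 0 \<longrightarrow> (\<forall>b0. P b0 b a > 0 \<longrightarrow> Ppi P b (pol b) b0 > 0) \<and> J + W b \<ge> input_term P W b (pol b) a"
        using K unfolding KKT_cond_def by blast+
      note S = sufficiency[OF channel pd eqs les]
      have "dp_sup P W b = J + W b" unfolding dp_sup_def
      proof (rule cSup_eq_maximum)
        show "J + W b \<in> (\<lambda>q. stage_obj P W b q) ` {q. is_dist q}"
          using S(1) pd by (metis (mono_tags, lifting) image_eqI mem_Collect_eq)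
        show "\<And>x. x \<in> (\<lambda>q. stage_obj P W b q) ` {q. is_dist q} \<Longrightarrow> x \<le> J + W b"
          using S(2) by blast
      qed
      thus ?thesis using S(1) by simp
    qed
    show "achieves_sup P W pol \<and> DP_eq P J W"
      unfolding achieves_sup_def DP_eq_def using main pi_dist by simp
  qed
qed


end
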